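(* Let $R$ be a commutative ring with identity, $M$ an $R$-module and $a\in R$. Then $$\bigcap_{b\in R} b\Gamma_b(M)\subseteq a\Gamma_a(M)\subseteq S_a(M)\subseteq S(M)\subseteq \beta(M)\subseteq \operatorname{Rad}(M).$$
   Context: For $b\in R$, $b\Gamma_{b}(M)=\{bm \mid m\in M,\ b^{k}m=0 \text{ for some } k\in\mathbb{Z}^{+}\}$. An $R$-module $N$ is $b$-reduced if $b^2n=0$ implies $bn=0$ for $n\in N$, and reduced if it is $b$-reduced for all $b\in R$. A proper submodule $N$ of $M$ is $a$-semiprime (resp. semiprime) if $M/N$ is $a$-reduced (resp. reduced). A proper submodule $N$ of $M$ is prime if for all $r\in R$, $m\in M$, $rm\in N$ implies $m\in N$ or $rM\subseteq N$. $S_a(M)$, $S(M)$, $\beta(M)$, $\operatorname{Rad}(M)$ denote respectively the intersections of all $a$-semiprime, all semiprime, all prime, and all maximal submodules of $M$ (the empty intersection being $M$). *)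

theory Defs
  imports "HOL.Modules"
begin

(* The R-module M is the whole type 'm, with scalar multiplication scale : R => M => M,
   where R is the commutative ring with identity 'r::comm_ring_1 and module scale holds. *)

definition bGamma :: "('r::comm_ring_1 \<Rightarrow> 'm::ab_group_add \<Rightarrow> 'm) \<Rightarrow> 'r \<Rightarrow> 'm set" where
  "bGamma scale b = {scale b m | m. \<exists>k::nat. k > 0 \<and> scale (b ^ k) m = 0}"

definition proper_submodule :: "('r::comm_ring_1 \<Rightarrow> 'm::ab_group_add \<Rightarrow> 'm) \<Rightarrow> 'm set \<Rightarrow> bool" where
  "proper_submodule scale N \<longleftrightarrow> module.subspace scale N \<and> N \<noteq> UNIV"

definition quotient_reduced_at :: "('r::comm_ring_1 \<Rightarrow> 'm::ab_group_add \<Rightarrow> 'm) \<Rightarrow> 'r \<Rightarrow> 'm set \<Rightarrow> bool" where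
  "quotient_reduced_at scale b N \<longleftrightarrow> (\<forall>m. scale (b ^ 2) m \<in> N \<longrightarrow> scale b m \<in> N)"

definition a_semiprime :: "('r::comm_ring_1 \<Rightarrow> 'm::ab_group_add \<Rightarrow> 'm) \<Rightarrow> 'r \<Rightarrow> 'm set \<Rightarrow> bool" where
  "a_semiprime scale a N \<longleftrightarrow> proper_submodule scale N \<and> quotient_reduced_at scale a N"

definition semiprime_submodule :: "('r::comm_ring_1 \<Rightarrow> 'm::ab_group_add \<Rightarrow> 'm) \<Rightarrow> 'm set \<Rightarrow> bool" where
  "semiprime_submodule scale N \<longleftrightarrow> proper_submodule scale N \<and> (\<forall>b. quotient_reduced_at scale b N)"

definition prime_submodule :: "('r::comm_ring_1 \<Rightarrow> 'm::ab_group_add \<Rightarrow> 'm) \<Rightarrow> 'm set \<Rightarrow> bool" where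
  "prime_submodule scale N \<longleftrightarrow> proper_submodule scale N \<and>
     (\<forall>r m. scale r m \<in> N \<longrightarrow> m \<in> N \<or> (\<forall>x. scale r x \<in> N))"

definition maximal_submodule :: "('r::comm_ring_1 \<Rightarrow> 'm::ab_group_add \<Rightarrow> 'm) \<Rightarrow> 'm set \<Rightarrow> bool" where
  "maximal_submodule scale N \<longleftrightarrow> proper_submodule scale N \<and>
     (\<forall>K. module.subspace scale K \<and> N \<subseteq> K \<longrightarrow> K = N \<or> K = UNIV)"

definition S_a :: "('r::comm_ring_1 \<Rightarrow> 'm::ab_group_add \<Rightarrow> 'm) \<Rightarrow> 'r \<Rightarrow> 'm set" where
  "S_a scale a = \<Inter> {N. a_semiprime scale a N}"

definition S_M :: "('r::comm_ring_1 \<Rightarrow> 'm::ab_group_add \<Rightarrow> 'm) \<Rightarrow> 'm set" where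
  "S_M scale = \<Inter> {N. semiprime_submodule scale N}"

definition beta_M :: "('r::comm_ring_1 \<Rightarrow> 'm::ab_group_add \<Rightarrow> 'm) \<Rightarrow> 'm set" where
  "beta_M scale = \<Inter> {N. prime_submodule scale N}"

definition Rad_M :: "('r::comm_ring_1 \<Rightarrow> 'm::ab_group_add \<Rightarrow> 'm) \<Rightarrow> 'm set" where
  "Rad_M scale = \<Inter> {N. maximal_submodule scale N}"

end

theory Submission
  imports Defs
begin

context module
begin

lemma down_pow:
  assumes red: "\<And>y. scale (a ^ 2) y \<in> N \<Longrightarrow> scale a y \<in> N"
    and h: "scale (a ^ (Suc j)) m \<in> N"
  shows "scale a m \<in> N"
  using h
proof (induction j)
  case 0 then show ?case by simp
next
  case (Suc j)
  have "scale (a ^ 2) (scale (a ^ j) m) \<in> N"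
    using Suc.prems by (simp add: power_add[symmetric] mult.commute)
  then have "scale a (scale (a ^ j) m) \<in> N" by (rule red)
  then have "scale (a ^ Suc j) m \<in> N" by (simp add: mult.commute)
  then show ?case by (rule Suc.IH)
qed

lemma maximal_prime:
  assumes "maximal_submodule scale N"
  shows "prime_submodule scale N"
proof -
  have sN: "subspace N" and pN: "N \<noteq> UNIV"
    and mx: "\<And>K. subspace K \<Longrightarrow> N \<subseteq> K \<Longrightarrow> K = N \<or> K = UNIV"
    using assms unfolding maximal_submodule_def proper_submodule_def by auto
  have "\<forall>x. scale r x \<in> N" if rm: "scale r m \<in> N" and mN: "m \<notin> N" for r m
  proof
    fix x
    define K where "K = {n + scale s m | n s. n \<in> N}"
    have "subspace K"
    proof (rule subspaceI)
      show "0 \<in> K" unfolding K_def using subspace_0[OF sN]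
        by (auto intro!: exI[of _ 0] exI[of _ "0::'a"])
    next
      fix x y assume "x \<in> K" "y \<in> K"
      then obtain n1 s1 n2 s2 where "x = n1 + scale s1 m" "n1 \<in> N" "y = n2 + scale s2 m" "n2 \<in> N"
        unfolding K_def by auto
      then show "x + y \<in> K" unfolding K_def
        by (auto intro!: exI[of _ "n1 + n2"] exI[of _ "s1 + s2"] subspace_add[OF sN]
                 simp: scale_left_distrib algebra_simps)
    next
      fix c x assume "x \<in> K"
      then obtain n1 s1 where "x = n1 + scale s1 m" "n1 \<in> N" unfolding K_def by auto
      then show "scale c x \<in> K" unfolding K_def
        by (auto intro!: exI[of _ "scale c n1"] exI[of _ "c * s1"] subspace_scale[OF sN]
                 simp: scale_right_distrib)
    qed
    moreover have "N \<subseteq> K" unfolding K_def by (force intro: exI[of _ "0::'a"])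
    moreover have "m \<in> K" unfolding K_def using subspace_0[OF sN]
      by (force intro!: exI[of _ 0] exI[of _ "1::'a"])
    ultimately have "K = UNIV" using mx mN by blast
    then have "x \<in> K" by simp
    then obtain n s where x: "x = n + scale s m" "n \<in> N" unfolding K_def by blast
    have "scale r x = scale r n + scale s (scale r m)"
      using x by (simp add: scale_right_distrib mult.commute)
    then show "scale r x \<in> N"
      using x rm by (metis subspace_add subspace_scale sN)
  qed
  then show ?thesis using assms unfolding prime_submodule_def maximal_submodule_def by blast
qed

lemma prime_semiprime:
  assumes "prime_submodule scale N"
  shows "semiprime_submodule scale N"
  using assms unfolding prime_submodule_def semiprime_submodule_def quotient_reduced_at_def
  by (metis power2_eq_square scale_scale)

end

theorem mainTheorem12:
  fixes scale :: "'r::comm_ring_1 \<Rightarrow> 'm::ab_group_add \<Rightarrow> 'm" and a :: 'r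
  assumes "module scale"
  shows "(\<Inter>b. bGamma scale b) \<subseteq> bGamma scale a
    \<and> bGamma scale a \<subseteq> S_a scale a
    \<and> S_a scale a \<subseteq> S_M scale
    \<and> S_M scale \<subseteq> beta_M scale
    \<and> beta_M scale \<subseteq> Rad_M scale"
proof (intro conjI)
  interpret module scale by (rule assms)
  show "(\<Inter>b. bGamma scale b) \<subseteq> bGamma scale a" by blast
  show "bGamma scale a \<subseteq> S_a scale a"
  proof
    fix x assume "x \<in> bGamma scale a"
    then obtain m k where x: "x = scale a m" "k > 0" "scale (a ^ k) m = 0"
      unfolding bGamma_def by auto
    then obtain j where k: "k = Suc j" by (cases k) auto
    show "x \<in> S_a scale a" unfolding S_a_def
    proof
      fix N assume "N \<in> {N. a_semiprime scale a N}"
      then have sN: "subspace N" and red: "\<And>y. scale (a ^ 2) y \<in> N \<Longrightarrow> scale a y \<in> N"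
        unfolding a_semiprime_def proper_submodule_def quotient_reduced_at_def by auto
      have "scale (a ^ Suc j) m \<in> N" using x k subspace_0[OF sN] by simp
      then show "x \<in> N" using down_pow[OF red] x by blast
    qed
  qed
  show "S_a scale a \<subseteq> S_M scale"
    unfolding S_a_def S_M_def a_semiprime_def semiprime_submodule_def by blast
  show "S_M scale \<subseteq> beta_M scale"
    unfolding S_M_def beta_M_def using prime_semiprime by blast
  show "beta_M scale \<subseteq> Rad_M scale"
    unfolding beta_M_def Rad_M_def using maximal_prime by blast
qed

end
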